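(* Let $X$ be a Banach space, $F:X\rightrightarrows Y$ a set-valued map with nonempty values, $\bar x\in X$ and $T\in\partial F(\bar x)$. Then $y^*\circ T\in\partial(y^*\circ F)(\bar x)$ for all $y^*\in K^+\setminus\{0\}$.
   Context: $Y$ is a real normed space with dual $Y^*$; $B(X,Y)$ is the space of bounded linear operators $X\to Y$; $B(x,\delta)$ is the open ball and $D_Y$ the closed unit ball. $K\subset Y$ is a pointed closed convex cone and $K^+=\{y^*\in Y^*: y^*(k)\ge0\ \forall k\in K\}$. $\operatorname{Epi}F(x)=F(x)+K$; for nonempty $A,B$, $e(A,B)=\sup_{a\in A}\inf_{b\in B}\|a-b\|$. The Fréchet subdifferential $\widehat\partial F(\bar x)$ is the set of all $T\in B(X,Y)$ such that for every $\varepsilon>0$ there is $\delta>0$ with $F(x)+K\subset F(\bar x)+K+T(x-\bar x)+\varepsilon\|x-\bar x\|D_Y$ for all $x\in B(\bar x,\delta)$. The limiting subdifferential $\partial F(\bar x)$ is the set of all $T\in B(X,Y)$ for which there exist a sequence $x_n\to\bar x$ with $e(\operatorname{Epi}F(x_n),\operatorname{Epi}F(\bar x))\to0$ and operators $T_n\in\widehat\partial F(x_n)$ with $T_n(x)\to T(x)$ for every $x\in X$. Both definitions are also applied to maps $G:X\rightrightarrows\mathbb R$ with $Y=\mathbb R$, $K=[0,\infty)$. For $y^*\in Y^*$, $y^*\circ F$ is $x\mapsto\{y^*(y):y\in F(x)\}$. *)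

theory Defs
  imports "HOL-Analysis.Analysis"
begin

definition pointed_closed_convex_cone :: "'b::real_normed_vector set \<Rightarrow> bool" where
  "pointed_closed_convex_cone K \<longleftrightarrow>
     closed K \<and> convex K \<and> cone K \<and> K \<inter> uminus ` K = {0}"

definition dual_cone :: "'b::real_normed_vector set \<Rightarrow> ('b \<Rightarrow> real) set" where
  "dual_cone K = {ys. bounded_linear ys \<and> (\<forall>k\<in>K. ys k \<ge> 0)}"

definition Epi :: "('a \<Rightarrow> 'b::real_normed_vector set) \<Rightarrow> 'b set \<Rightarrow> 'a \<Rightarrow> 'b set" where
  "Epi F K x = {y + k | y k. y \<in> F x \<and> k \<in> K}"

definition excess :: "'b::real_normed_vector set \<Rightarrow> 'b set \<Rightarrow> ereal" where
  "excess A B = (SUP a\<in>A. INF b\<in>B. ereal (norm (a - b)))"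

definition frechet_subdiff ::
  "'b::real_normed_vector set \<Rightarrow> ('a::real_normed_vector \<Rightarrow> 'b set) \<Rightarrow> 'a \<Rightarrow> ('a \<Rightarrow> 'b) set" where
  "frechet_subdiff K F xb = {T. bounded_linear T \<and>
     (\<forall>\<epsilon>>0. \<exists>\<delta>>0. \<forall>x\<in>ball xb \<delta>.
        Epi F K x \<subseteq> {w + T (x - xb) + (\<epsilon> * norm (x - xb)) *\<^sub>R d | w d.
                           w \<in> Epi F K xb \<and> d \<in> cball 0 1})}"

definition limiting_subdiff ::
  "'b::real_normed_vector set \<Rightarrow> ('a::real_normed_vector \<Rightarrow> 'b set) \<Rightarrow> 'a \<Rightarrow> ('a \<Rightarrow> 'b) set" where
  "limiting_subdiff K F xb = {T. bounded_linear T \<and>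
     (\<exists>xs Ts. xs \<longlonglongrightarrow> xb
        \<and> (\<lambda>n. excess (Epi F K (xs n)) (Epi F K xb)) \<longlonglongrightarrow> 0
        \<and> (\<forall>n. Ts n \<in> frechet_subdiff K F (xs n))
        \<and> (\<forall>x. (\<lambda>n. Ts n x) \<longlonglongrightarrow> T x))}"

end

theory Submission
  imports Defs
begin

lemma excess_nonneg:
  assumes "A \<noteq> {}" shows "0 \<le> excess A B"
proof -
  obtain a where "a \<in> A" using assms by blast
  have "0 \<le> (INF b\<in>B. ereal (norm (a - b)))" by (rule INF_greatest) simp
  also have "\<dots> \<le> excess A B" unfolding excess_def using \<open>a \<in> A\<close> by (rule SUP_upper)
  finally show ?thesis .
qed

theorem mainTheorem8:
  fixes F :: "'a::banach \<Rightarrow> 'b::real_normed_vector set"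
    and K :: "'b set" and xb :: 'a and T :: "'a \<Rightarrow> 'b" and ys :: "'b \<Rightarrow> real"
  assumes "pointed_closed_convex_cone K"
    and "\<forall>x. F x \<noteq> {}"
    and "T \<in> limiting_subdiff K F xb"
    and "ys \<in> dual_cone K" and "ys \<noteq> (\<lambda>_. 0)"
  shows "ys \<circ> T \<in> limiting_subdiff {0..} (\<lambda>x. ys ` F x) xb"
proof -
  have K0: "0 \<in> K" using assms(1) unfolding pointed_closed_convex_cone_def by blast
  have bys: "bounded_linear ys" and ysK: "\<And>k. k \<in> K \<Longrightarrow> ys k \<ge> 0"
    using assms(4) unfolding dual_cone_def by auto
  define C where "C = onorm ys + 1"
  have Cpos: "C > 0" using onorm_pos_le[OF bys] unfolding C_def by simp
  have ysb: "\<And>d. \<bar>ys d\<bar> \<le> C * norm d"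
  proof -
    fix d
    have "\<bar>ys d\<bar> \<le> onorm ys * norm d" using onorm[OF bys] by simp
    also have "\<dots> \<le> C * norm d" unfolding C_def by (simp add: mult_right_mono)
    finally show "\<bar>ys d\<bar> \<le> C * norm d" .
  qed
  have lin: "linear ys" using bys bounded_linear.linear by blast
  have ysadd: "\<And>a b. ys (a + b) = ys a + ys b" using lin linear_add by blast
  have ysdiff: "\<And>a b. ys (a - b) = ys a - ys b" using lin linear_diff by blast
  have yssc: "\<And>c a. ys (c *\<^sub>R a) = c * ys a" using lin linear_scale by fastforce
  obtain xs Ts where bT: "bounded_linear T" and xs: "xs \<longlonglongrightarrow> xb"
    and ex: "(\<lambda>n. excess (Epi F K (xs n)) (Epi F K xb)) \<longlonglongrightarrow> 0"
    and fr: "\<And>n. Ts n \<in> frechet_subdiff K F (xs n)"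
    and pw: "\<And>x. (\<lambda>n. Ts n x) \<longlonglongrightarrow> T x"
    using assms(3) unfolding limiting_subdiff_def by blast
  define G where "G = (\<lambda>x. ys ` F x)"
  have EpiG: "\<And>x. Epi G {0..} x = {ys y + s | y s. y \<in> F x \<and> s \<ge> 0}"
    unfolding Epi_def G_def by auto
  have exbound: "excess (Epi G {0..} z) (Epi G {0..} xb) \<le> ereal (C * \<delta>)"
    if "excess (Epi F K z) (Epi F K xb) < ereal \<delta>" for z \<delta>
    unfolding excess_def
  proof (rule SUP_least)
    fix a assume "a \<in> Epi G {0..} z"
    then obtain y s where a: "a = ys y + s" "y \<in> F z" "s \<ge> 0" unfolding EpiG by blast
    have "y \<in> Epi F K z" unfolding Epi_def using a K0 by force
    then have "(INF e\<in>Epi F K xb. ereal (norm (y - e))) \<le> excess (Epi F K z) (Epi F K xb)"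
      unfolding excess_def by (rule SUP_upper)
    with that have "(INF e\<in>Epi F K xb. ereal (norm (y - e))) < ereal \<delta>" by simp
    then obtain e where e: "e \<in> Epi F K xb" "norm (y - e) < \<delta>" by (auto simp: INF_less_iff)
    then obtain w k where wk: "e = w + k" "w \<in> F xb" "k \<in> K" unfolding Epi_def by blast
    define b where "b = ys w + (ys k + s)"
    have bin: "b \<in> Epi G {0..} xb" unfolding EpiG b_def using wk ysK a by force
    have "a - b = ys (y - e)" unfolding a b_def wk ysdiff ysadd by simp
    moreover have "C * norm (y - e) \<le> C * \<delta>" using e Cpos by simp
    ultimately have "\<bar>a - b\<bar> \<le> C * \<delta>" using ysb[of "y - e"] by linarith
    then have "ereal (norm (a - b)) \<le> ereal (C * \<delta>)" by simp
    then show "(INF b\<in>Epi G {0..} xb. ereal (norm (a - b))) \<le> ereal (C * \<delta>)"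
      using bin by (meson INF_lower2)
  qed
  have ex2: "(\<lambda>n. excess (Epi G {0..} (xs n)) (Epi G {0..} xb)) \<longlonglongrightarrow> 0"
  proof (rule order_tendstoI)
    fix a :: ereal assume "a < 0"
    moreover have "\<And>n. 0 \<le> excess (Epi G {0..} (xs n)) (Epi G {0..} xb)"
      proof (rule excess_nonneg)
      fix n obtain y where "y \<in> F (xs n)" using assms(2) by blast
      then show "Epi G {0..} (xs n) \<noteq> {}" unfolding EpiG by fastforce
    qed
    ultimately show "\<forall>\<^sub>F n in sequentially. a < excess (Epi G {0..} (xs n)) (Epi G {0..} xb)"
      by (intro always_eventually allI) (rule less_le_trans)
  next
    fix a :: ereal assume "0 < a"
    then obtain r where r: "r > 0" "ereal r < a"
      using ereal_dense2[OF \<open>0 < a\<close>] by (auto simp: zero_ereal_def)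
    have "(0::ereal) < ereal (r / (2*C))" using r Cpos by simp
    then have "\<forall>\<^sub>F n in sequentially. excess (Epi F K (xs n)) (Epi F K xb) < ereal (r / (2*C))"
      using ex order_tendstoD(2) by blast
    then show "\<forall>\<^sub>F n in sequentially. excess (Epi G {0..} (xs n)) (Epi G {0..} xb) < a"
    proof eventually_elim
      case (elim n)
      have "excess (Epi G {0..} (xs n)) (Epi G {0..} xb) \<le> ereal (C * (r / (2*C)))"
        by (rule exbound[OF elim])
      also have "C * (r / (2*C)) = r/2" using Cpos by simp
      also have "ereal (r/2) < a" proof -
        have "ereal (r/2) < ereal r" using r by simp
        then show ?thesis using r(2) by (rule less_trans)
      qed
      finally show ?case .
    qed
  qed
  have fr2: "ys \<circ> Ts n \<in> frechet_subdiff {0..} G (xs n)" for n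
  proof -
    have bTn: "bounded_linear (Ts n)" and frn: "\<And>\<epsilon>. \<epsilon> > 0 \<Longrightarrow> \<exists>\<delta>>0. \<forall>x\<in>ball (xs n) \<delta>.
        Epi F K x \<subseteq> {w + Ts n (x - xs n) + (\<epsilon> * norm (x - xs n)) *\<^sub>R d | w d.
                           w \<in> Epi F K (xs n) \<and> d \<in> cball 0 1}"
      using fr[of n] unfolding frechet_subdiff_def by auto
    have "bounded_linear (ys \<circ> Ts n)" using bounded_linear_compose[OF bys bTn]
      by (simp add: comp_def)
    moreover have "\<exists>\<delta>>0. \<forall>x\<in>ball (xs n) \<delta>.
        Epi G {0..} x \<subseteq> {w + (ys \<circ> Ts n) (x - xs n) + (\<epsilon> * norm (x - xs n)) *\<^sub>R d | w d.
                           w \<in> Epi G {0..} (xs n) \<and> d \<in> cball 0 1}" if eps: "\<epsilon> > 0" for \<epsilon>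
    proof -
      obtain \<delta> where \<delta>: "\<delta> > 0" and H: "\<forall>x\<in>ball (xs n) \<delta>.
        Epi F K x \<subseteq> {w + Ts n (x - xs n) + (\<epsilon>/C * norm (x - xs n)) *\<^sub>R d | w d.
                           w \<in> Epi F K (xs n) \<and> d \<in> cball 0 1}"
        using frn[OF divide_pos_pos[OF eps Cpos]] by blast
      show ?thesis
      proof (intro exI conjI ballI subsetI)
        show "\<delta> > 0" by fact
        fix x a assume x: "x \<in> ball (xs n) \<delta>" and "a \<in> Epi G {0..} x"
        then obtain y s where a: "a = ys y + s" "y \<in> F x" "s \<ge> 0" unfolding EpiG by blast
        have "y \<in> Epi F K x" unfolding Epi_def using a K0 by force
        with H x obtain e d where ed: "y = e + Ts n (x - xs n) + (\<epsilon>/C * norm (x - xs n)) *\<^sub>R d"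
          "e \<in> Epi F K (xs n)" "d \<in> cball 0 1" by blast
        then obtain w k where wk: "e = w + k" "w \<in> F (xs n)" "k \<in> K" unfolding Epi_def by blast
        define w' where "w' = ys w + (ys k + s)"
        define d' where "d' = ys d / C"
        have w'in: "w' \<in> Epi G {0..} (xs n)" unfolding EpiG w'_def using wk ysK a by force
        have "\<bar>ys d\<bar> \<le> C" using ysb[of d] ed(3) Cpos
        proof -
          have "norm d \<le> 1" using ed(3) by simp
          then have "C * norm d \<le> C" using Cpos by (simp add: mult_left_le)
          then show ?thesis using ysb[of d] by linarith
        qed
        moreover have "\<bar>d'\<bar> = \<bar>ys d\<bar> / C" unfolding d'_def using Cpos by simp
        ultimately have "\<bar>d'\<bar> \<le> 1" using Cpos by (simp add: pos_divide_le_eq)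
        then have d'in: "d' \<in> cball 0 1" by simp
        have "a = w' + (ys \<circ> Ts n) (x - xs n) + (\<epsilon> * norm (x - xs n)) *\<^sub>R d'"
          unfolding a ed(1) wk w'_def d'_def using Cpos
          by (simp add: ysadd yssc field_simps)
        then show "a \<in> {w + (ys \<circ> Ts n) (x - xs n) + (\<epsilon> * norm (x - xs n)) *\<^sub>R d | w d.
                           w \<in> Epi G {0..} (xs n) \<and> d \<in> cball 0 1}"
          using w'in d'in by blast
      qed
    qed
    ultimately show ?thesis unfolding frechet_subdiff_def by blast
  qed
  have pw2: "(\<lambda>n. (ys \<circ> Ts n) x) \<longlonglongrightarrow> (ys \<circ> T) x" for x
    using bounded_linear.tendsto[OF bys pw[of x]] by simp
  have "bounded_linear (ys \<circ> T)" using bounded_linear_compose[OF bys bT] by (simp add: comp_def)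
  then show ?thesis unfolding limiting_subdiff_def G_def[symmetric]
  proof (intro CollectI conjI exI)
    show "xs \<longlonglongrightarrow> xb" by (rule xs)
    show "(\<lambda>n. excess (Epi G {0..} (xs n)) (Epi G {0..} xb)) \<longlonglongrightarrow> 0" by (rule ex2)
    show "\<forall>n. (\<lambda>n. ys \<circ> Ts n) n \<in> frechet_subdiff {0..} G (xs n)" using fr2 by simp
    show "\<forall>x. (\<lambda>n. (\<lambda>n. ys \<circ> Ts n) n x) \<longlonglongrightarrow> (ys \<circ> T) x" using pw2 by simp
  qed
qed

end
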